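(* Let $G$ be a finite simple connected graph that is edge-reconstructable (so that $ern(G)$ is defined), and suppose $ern(G)\geq 3$. Then $G$ is $2$-swappable.
   Context: All graphs are finite and simple. For a graph $G$ and $e\in E(G)$, the unlabeled graph $G-e$ is an edge-card of $G$; the edge-deck $\mathcal{ED}(G)$ is the multiset of all edge-cards $G-e$, $e\in E(G)$ (taken up to isomorphism). For a sub-multiset $S\subseteq\mathcal{ED}(G)$, a blocker of $S$ is a graph $H\not\cong G$ such that $S\subseteq\mathcal{ED}(H)$ as multisets. $G$ is reconstructable from $S$ if $S$ has no blocker; $G$ is edge-reconstructable if it is reconstructable from $\mathcal{ED}(G)$. For such $G$, the edge reconstruction number $ern(G)$ is the minimum size of a sub-multiset $S\subseteq\mathcal{ED}(G)$ from which $G$ is reconstructable. For $A\subseteq E(G)$ and $B\subseteq E(\bar G)$ (edges of the complement), $G-A+B$ denotes the graph on $V(G)$ with edge set $(E(G)\setminus A)\cup B$. For a positive integer $k$, $G$ is $k$-swappable if for every $e\in E(G)$ there exist $A\subseteq E(G)$ and $B\subseteq E(\bar G)$ with $e\in A$, $|A|\leq k$, and $G\cong G-A+B$. *)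

theory Defs
  imports Main "HOL-Library.Multiset"
begin

text \<open>A finite simple graph is a pair (V, E): a finite vertex set V of naturals and
a set E of 2-element subsets of V. Every finite graph is isomorphic to one of this form.\<close>

type_synonym graph = "nat set \<times> nat set set"

definition possible_edges :: "nat set \<Rightarrow> nat set set" where
  "possible_edges V = {{u, v} | u v. u \<in> V \<and> v \<in> V \<and> u \<noteq> v}"

definition is_graph :: "graph \<Rightarrow> bool" where
  "is_graph G \<longleftrightarrow> finite (fst G) \<and> snd G \<subseteq> possible_edges (fst G)"

definition graph_iso :: "graph \<Rightarrow> graph \<Rightarrow> bool" where
  "graph_iso G H \<longleftrightarrow> (\<exists>f. bij_betw f (fst G) (fst H) \<and>
     (\<forall>u\<in>fst G. \<forall>v\<in>fst G. {u, v} \<in> snd G \<longleftrightarrow> {f u, f v} \<in> snd H))"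

text \<open>Unlabeled graph = isomorphism class.\<close>
definition iso_class :: "graph \<Rightarrow> graph set" where
  "iso_class G = {H. is_graph H \<and> graph_iso H G}"

definition connected_graph :: "graph \<Rightarrow> bool" where
  "connected_graph G \<longleftrightarrow> fst G \<noteq> {} \<and>
     (\<forall>u\<in>fst G. \<forall>v\<in>fst G. (u, v) \<in> {(x, y). {x, y} \<in> snd G}\<^sup>*)"

definition edge_deck :: "graph \<Rightarrow> graph set multiset" where
  "edge_deck G = image_mset (\<lambda>e. iso_class (fst G, snd G - {e})) (mset_set (snd G))"

definition is_blocker :: "graph \<Rightarrow> graph set multiset \<Rightarrow> graph \<Rightarrow> bool" where
  "is_blocker G S H \<longleftrightarrow> is_graph H \<and> \<not> graph_iso H G \<and> S \<subseteq># edge_deck H"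

definition reconstructable_from :: "graph \<Rightarrow> graph set multiset \<Rightarrow> bool" where
  "reconstructable_from G S \<longleftrightarrow> \<not> (\<exists>H. is_blocker G S H)"

definition edge_reconstructable :: "graph \<Rightarrow> bool" where
  "edge_reconstructable G \<longleftrightarrow> reconstructable_from G (edge_deck G)"

definition ern :: "graph \<Rightarrow> nat" where
  "ern G = (LEAST k. \<exists>S. S \<subseteq># edge_deck G \<and> size S = k \<and> reconstructable_from G S)"

definition swappable :: "nat \<Rightarrow> graph \<Rightarrow> bool" where
  "swappable k G \<longleftrightarrow> (\<forall>e\<in>snd G. \<exists>A B. A \<subseteq> snd G \<and>
      B \<subseteq> possible_edges (fst G) - snd G \<and> e \<in> A \<and> card A \<le> k \<and>
      graph_iso (fst G, (snd G - A) \<union> B) G)"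

end

theory Submission
  imports Defs
begin

lemma poss_sub: "possible_edges V \<subseteq> Pow V"
  unfolding possible_edges_def by auto

lemma poss_img:
  assumes "bij_betw \<chi> V W" "x \<in> possible_edges V"
  shows "\<chi> ` x \<in> possible_edges W"
proof -
  from assms(2) obtain u v where x: "x = {u,v}" "u \<in> V" "v \<in> V" "u \<noteq> v"
    unfolding possible_edges_def by auto
  have inj: "inj_on \<chi> V" using assms(1) unfolding bij_betw_def by blast
  have "\<chi> u \<noteq> \<chi> v" using inj_onD[OF inj, of u v] x by blast
  moreover have "\<chi> u \<in> W" "\<chi> v \<in> W" using assms(1) x bij_betwE by blast+
  ultimately show ?thesis using x unfolding possible_edges_def by auto
qed

lemma iso_intro:
  assumes "bij_betw \<chi> V W" "X \<subseteq> Pow V" "(`) \<chi> ` X = Y"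
  shows "graph_iso (V, X) (W, Y)"
  unfolding graph_iso_def fst_conv snd_conv
proof (intro exI conjI ballI)
  show "bij_betw \<chi> V W" by fact
  fix u v assume uv: "u \<in> V" "v \<in> V"
  have inj: "inj_on ((`) \<chi>) (Pow V)" using assms(1) inj_on_image_Pow bij_betw_def by blast
  have "{\<chi> u, \<chi> v} = \<chi> ` {u,v}" by simp
  then show "({u, v} \<in> X) = ({\<chi> u, \<chi> v} \<in> Y)"
    using inj_on_image_mem_iff[OF inj, of "{u,v}" X] uv assms(2,3) by auto
qed

lemma iso_elim:
  assumes "graph_iso (V, X) (W, Y)" "X \<subseteq> possible_edges V" "Y \<subseteq> possible_edges W"
  shows "\<exists>\<chi>. bij_betw \<chi> V W \<and> (`) \<chi> ` X = Y"
proof -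
  from assms(1) obtain \<chi> where b: "bij_betw \<chi> V W"
    and ed: "\<And>u v. u \<in> V \<Longrightarrow> v \<in> V \<Longrightarrow> {u, v} \<in> X \<longleftrightarrow> {\<chi> u, \<chi> v} \<in> Y"
    unfolding graph_iso_def by auto
  have "(`) \<chi> ` X = Y"
  proof
    show "(`) \<chi> ` X \<subseteq> Y"
    proof
      fix z assume "z \<in> (`) \<chi> ` X"
      then obtain x where x: "x \<in> X" "z = \<chi> ` x" by auto
      then obtain u v where uv: "x = {u,v}" "u \<in> V" "v \<in> V"
        using assms(2) unfolding possible_edges_def by blast
      have "{\<chi> u, \<chi> v} \<in> Y" using ed[OF uv(2,3)] x uv by simp
      then show "z \<in> Y" using x uv by simp
    qed
  next
    show "Y \<subseteq> (`) \<chi> ` X"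
    proof
      fix y assume y: "y \<in> Y"
      then obtain a c where ac: "y = {a,c}" "a \<in> W" "c \<in> W"
        using assms(3) unfolding possible_edges_def by blast
      define u where "u = inv_into V \<chi> a"
      define v where "v = inv_into V \<chi> c"
      have "u \<in> V" "v \<in> V" "\<chi> u = a" "\<chi> v = c"
        using ac b unfolding u_def v_def
        by (auto simp: bij_betw_inv_into_right inv_into_into bij_betw_def)
      then have uvX: "{u,v} \<in> X" using ed[of u v] y ac by simp
      have "y = \<chi> ` {u,v}" using ac \<open>\<chi> u = a\<close> \<open>\<chi> v = c\<close> by simp
      then show "y \<in> (`) \<chi> ` X" using uvX by blast
    qed
  qed
  with b show ?thesis by blast
qed

lemma iso_refl: "graph_iso G G"
  unfolding graph_iso_def by (intro exI[of _ id]) auto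

lemma iso_class_eq: "iso_class A = iso_class B \<Longrightarrow> is_graph A \<Longrightarrow> graph_iso A B"
  unfolding iso_class_def using iso_refl by blast

lemma ern_le:
  assumes "S \<subseteq># edge_deck G" "reconstructable_from G S"
  shows "ern G \<le> size S"
  unfolding ern_def by (rule Least_le) (use assms in blast)

lemma two_sub:
  assumes "{#a, b#} \<subseteq># image_mset c (mset_set EH)" "finite EH"
  shows "\<exists>x y. x \<in> EH \<and> y \<in> EH \<and> x \<noteq> y \<and> c x = a \<and> c y = b"
proof -
  have "a \<in># {#a,b#}" by simp
  then have "a \<in># image_mset c (mset_set EH)" by (rule mset_subset_eqD[OF assms(1)])
  then have "a \<in> c ` EH" using assms(2) by simp
  then obtain x where x: "x \<in> EH" "c x = a" by (auto elim!: imageE)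
  have "mset_set EH = mset_set (insert x (EH - {x}))" using x by (simp add: insert_absorb)
  also have "\<dots> = add_mset x (mset_set (EH - {x}))" by (rule mset_set.insert) (use assms(2) in auto)
  finally have "image_mset c (mset_set EH) = add_mset a (image_mset c (mset_set (EH - {x})))"
    using x by simp
  then have "add_mset a {#b#} \<subseteq># add_mset a (image_mset c (mset_set (EH - {x})))"
    using assms(1) by simp
  then have "{#b#} \<subseteq># image_mset c (mset_set (EH - {x}))"
    by (simp only: mset_subset_eq_add_mset_cancel)
  then have "b \<in># image_mset c (mset_set (EH - {x}))" by simp
  then have "b \<in> c ` (EH - {x})" using assms(2) by simp
  then obtain y where "y \<in> EH - {x}" "c y = b" by (auto elim!: imageE)
  then show ?thesis using x by blast
qed

lemma img_id: assumes "\<And>s. s \<in> X \<Longrightarrow> f s = s" shows "f ` X = X"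
proof -
  have "f ` X = id ` X" by (rule image_cong) (simp_all add: assms)
  then show ?thesis by simp
qed

theorem mainTheorem1:
  fixes G :: graph
  assumes "is_graph G"
    and "connected_graph G"
    and "edge_reconstructable G"
    and "ern G \<ge> 3"
  shows "swappable 2 G"
proof (rule ccontr)
  assume ns: "\<not> swappable 2 G"
  obtain V E where G: "G = (V, E)" by (cases G)
  have finV: "finite V" and EV: "E \<subseteq> possible_edges V"
    using assms(1) G unfolding is_graph_def by auto
  have EP: "E \<subseteq> Pow V" using EV poss_sub by blast
  have finE: "finite E" using finV EP by (meson finite_Pow_iff finite_subset)
  from ns obtain e where eE: "e \<in> E" and noswap: "\<And>A B. A \<subseteq> E \<Longrightarrow> B \<subseteq> possible_edges V - E
      \<Longrightarrow> e \<in> A \<Longrightarrow> card A \<le> 2 \<Longrightarrow> \<not> graph_iso (V, E - A \<union> B) G"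
    unfolding swappable_def G by auto
  have nsw: "False" if "bij_betw \<chi> V V" "A \<subseteq> E" "B \<subseteq> possible_edges V - E" "e \<in> A"
    "card A \<le> 2" "(`) \<chi> ` (E - A \<union> B) = E" for \<chi> A B
  proof -
    have "E - A \<union> B \<subseteq> Pow V" using EP that(3) poss_sub by blast
    then have "graph_iso (V, E - A \<union> B) G" using iso_intro[OF that(1)] that(6) G by simp
    then show False using noswap that by blast
  qed
  define sw1 where "sw1 g \<longleftrightarrow> (\<exists>b \<chi>. b \<in> possible_edges V - E \<and> bij_betw \<chi> V V \<and>
      (`) \<chi> ` (E - {g} \<union> {b}) = E)" for g
  have "reconstructable_from G (edge_deck G)" using assms(3) unfolding edge_reconstructable_def .
  then have "ern G \<le> size (edge_deck G)" by (rule ern_le[rotated]) simp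
  then have cardE: "card E \<ge> 3" using assms(4) G unfolding edge_deck_def by simp
  have sw1e: "\<not> sw1 e"
  proof
    assume "sw1 e"
    then obtain b \<chi> where "b \<in> possible_edges V - E" "bij_betw \<chi> V V"
      "(`) \<chi> ` (E - {e} \<union> {b}) = E" unfolding sw1_def by blast
    then show False using nsw[of \<chi> "{e}" "{b}"] eE by auto
  qed
  obtain f where fE: "f \<in> E" "f \<noteq> e" and fsw: "(\<exists>g\<in>E. sw1 g) \<Longrightarrow> sw1 f"
  proof (cases "\<exists>g\<in>E. sw1 g")
    case True
    then obtain g where "g \<in> E" "sw1 g" by blast
    then show ?thesis using that sw1e by metis
  next
    case False
    have "E - {e} \<noteq> {}"
    proof
      assume "E - {e} = {}"
      then have "E \<subseteq> {e}" by blast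
      then have "card E \<le> card {e}" by (intro card_mono) auto
      then have "card E \<le> 1" by simp
      then show False using cardE by simp
    qed
    then obtain f where "f \<in> E" "f \<noteq> e" by blast
    then show ?thesis using that False by blast
  qed
  define c where "c x = iso_class (fst G, snd G - {x})" for x
  define S where "S = {#c e, c f#}"
  have "{#e, f#} \<subseteq># mset_set E"
  proof -
    have "mset_set {e, f} \<subseteq># mset_set E"
      by (rule subset_imp_msubset_mset_set) (use eE fE finE in auto)
    then show ?thesis using fE by simp
  qed
  then have "image_mset c {#e, f#} \<subseteq># image_mset c (mset_set E)" by (rule image_mset_subseteq_mono)
  then have Sdeck: "S \<subseteq># edge_deck G" unfolding S_def edge_deck_def c_def using G by simp
  have "\<not> reconstructable_from G S"
  proof
    assume "reconstructable_from G S"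
    then have "ern G \<le> size S" by (rule ern_le[OF Sdeck])
    then show False using assms(4) unfolding S_def by simp
  qed
  then obtain H where Hg: "is_graph H" and HG: "\<not> graph_iso H G" and HS: "S \<subseteq># edge_deck H"
    unfolding reconstructable_from_def is_blocker_def by auto
  obtain W EH where H: "H = (W, EH)" by (cases H)
  have finW: "finite W" and EHW: "EH \<subseteq> possible_edges W"
    using Hg H unfolding is_graph_def by auto
  have EHP: "EH \<subseteq> Pow W" using EHW poss_sub by blast
  have finEH: "finite EH" using finW EHP by (meson finite_Pow_iff finite_subset)
  have "{#c e, c f#} \<subseteq># image_mset (\<lambda>x. iso_class (W, EH - {x})) (mset_set EH)"
    using HS unfolding S_def edge_deck_def H fst_conv snd_conv .
  from two_sub[OF this finEH] obtain x y where xy: "x \<in> EH" "y \<in> EH" "x \<noteq> y"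
    "iso_class (W, EH - {x}) = c e" "iso_class (W, EH - {y}) = c f"
    by blast
  have gx: "is_graph (W, EH - {x})" "is_graph (W, EH - {y})" using finW EHW unfolding is_graph_def by auto
  have "graph_iso (W, EH - {x}) (V, E - {e})"
    using iso_class_eq[OF xy(4)[unfolded c_def G fst_conv snd_conv] gx(1)] .
  moreover have "EH - {x} \<subseteq> possible_edges W" "E - {e} \<subseteq> possible_edges V" using EHW EV by auto
  ultimately obtain \<psi> where \<psi>: "bij_betw \<psi> W V" "(`) \<psi> ` (EH - {x}) = E - {e}"
    using iso_elim by metis
  have "graph_iso (W, EH - {y}) (V, E - {f})"
    using iso_class_eq[OF xy(5)[unfolded c_def G fst_conv snd_conv] gx(2)] .
  moreover have "EH - {y} \<subseteq> possible_edges W" "E - {f} \<subseteq> possible_edges V" using EHW EV by auto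
  ultimately obtain \<mu> where \<mu>: "bij_betw \<mu> W V" "(`) \<mu> ` (EH - {y}) = E - {f}"
    using iso_elim by metis
  have injpsi: "inj_on ((`) \<psi>) (Pow W)" using \<psi>(1) inj_on_image_Pow bij_betw_def by blast
  define b where "b = \<psi> ` x"
  have bP: "b \<in> possible_edges V" using poss_img[OF \<psi>(1)] xy(1) EHW b_def by blast
  have "b \<notin> (`) \<psi> ` (EH - {x})" unfolding b_def
    using inj_on_image_mem_iff[OF injpsi, of x "EH - {x}"] xy(1) EHP by blast
  then have bnot: "b \<notin> E - {e}" using \<psi>(2) by simp
  have imgEH: "(`) \<psi> ` EH = E - {e} \<union> {b}"
  proof -
    have "EH = insert x (EH - {x})" using xy(1) by blast
    then have "(`) \<psi> ` EH = insert b ((`) \<psi> ` (EH - {x}))" unfolding b_def by (metis image_insert)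
    then show ?thesis using \<psi>(2) by auto
  qed
  have bE: "b \<notin> E"
  proof
    assume "b \<in> E"
    then have "b = e" using bnot by blast
    then have "(`) \<psi> ` EH = E" using imgEH eE by auto
    then have "graph_iso H G" using iso_intro[OF \<psi>(1) EHP] G H by simp
    then show False using HG by simp
  qed
  define h where "h = \<psi> ` y"
  have "y \<in> EH - {x}" using xy by blast
  then have "h \<in> (`) \<psi> ` (EH - {x})" unfolding h_def by (rule imageI)
  then have hE: "h \<in> E - {e}" using \<psi>(2) by simp
  have hb: "h \<noteq> b"
  proof
    assume "h = b"
    then have "\<psi> ` y = \<psi> ` x" unfolding h_def b_def .
    moreover have "y \<in> Pow W" "x \<in> Pow W" using xy EHP by auto
    ultimately have "y = x" by (rule inj_onD[OF injpsi])
    then show False using xy by blast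
  qed
  have img2: "(`) \<psi> ` (EH - {y}) = E - {e, h} \<union> {b}"
  proof -
    have "(`) \<psi> ` (EH - {y}) = (`) \<psi> ` EH - (`) \<psi> ` {y}"
      by (rule inj_on_image_set_diff[OF injpsi]) (use EHP xy in auto)
    then show ?thesis using imgEH hb bE unfolding h_def by auto
  qed
  define \<psi>' where "\<psi>' = inv_into W \<psi>"
  have \<psi>'b: "bij_betw \<psi>' V W" unfolding \<psi>'_def using \<psi>(1) by (rule bij_betw_inv_into)
  have canc: "\<psi>' ` (\<psi> ` s) = s" if "s \<subseteq> W" for s
  proof -
    have "\<psi>' (\<psi> w) = w" if "w \<in> W" for w unfolding \<psi>'_def using \<psi>(1) that by (rule bij_betw_inv_into_left)
    then show ?thesis using that by (simp add: image_image subset_eq)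
  qed
  have img2': "(`) \<psi>' ` (E - {e, h} \<union> {b}) = EH - {y}"
  proof -
    have "(`) \<psi>' ` (E - {e, h} \<union> {b}) = (`) \<psi>' ` ((`) \<psi> ` (EH - {y}))" using img2 by simp
    also have "\<dots> = (\<lambda>s. \<psi>' ` (\<psi> ` s)) ` (EH - {y})" by (rule image_image)
    also have "\<dots> = EH - {y}" by (rule img_id) (use canc EHP in auto)
    finally show ?thesis .
  qed
  define \<chi> where "\<chi> = \<mu> \<circ> \<psi>'"
  have \<chi>b: "bij_betw \<chi> V V" unfolding \<chi>_def using \<psi>'b \<mu>(1) by (rule bij_betw_trans)
  have img3: "(`) \<chi> ` (E - {e, h} \<union> {b}) = E - {f}"
  proof -
    have "(`) \<chi> ` (E - {e, h} \<union> {b}) = (`) \<mu> ` ((`) \<psi>' ` (E - {e, h} \<union> {b}))"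
      unfolding \<chi>_def by (simp add: image_image image_comp)
    also have "\<dots> = (`) \<mu> ` (EH - {y})" by (simp only: img2')
    also have "\<dots> = E - {f}" by (rule \<mu>(2))
    finally show ?thesis .
  qed
  define \<chi>' where "\<chi>' = inv_into V \<chi>"
  have \<chi>'b: "bij_betw \<chi>' V V" unfolding \<chi>'_def using \<chi>b by (rule bij_betw_inv_into)
  have chR: "\<chi> ` (\<chi>' ` s) = s" if "s \<subseteq> V" for s
  proof -
    have "\<chi> (\<chi>' w) = w" if "w \<in> V" for w unfolding \<chi>'_def using \<chi>b that by (rule bij_betw_inv_into_right)
    then have "(\<lambda>w. \<chi> (\<chi>' w)) ` s = s" using that by (intro img_id) auto
    then show ?thesis by (simp only: image_image)
  qed
  have pull: "\<chi>' ` z \<in> possible_edges V \<and> \<chi> ` (\<chi>' ` z) = z \<and> \<chi>' ` z \<notin> E - {e, h} \<union> {b}"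
    if "z \<in> possible_edges V" "z \<notin> E - {f}" for z
  proof (intro conjI)
    show zp: "\<chi>' ` z \<in> possible_edges V" using poss_img[OF \<chi>'b that(1)] .
    have "z \<subseteq> V" using that(1) poss_sub by auto
    then show zz: "\<chi> ` (\<chi>' ` z) = z" by (rule chR)
    show "\<chi>' ` z \<notin> E - {e, h} \<union> {b}"
    proof
      assume "\<chi>' ` z \<in> E - {e, h} \<union> {b}"
      then have "\<chi> ` (\<chi>' ` z) \<in> (`) \<chi> ` (E - {e, h} \<union> {b})" by (rule imageI)
      then have "z \<in> E - {f}" by (simp only: zz img3)
      then show False using that(2) by simp
    qed
  qed
  define c0 where "c0 = \<chi>' ` f"
  have fP: "f \<in> possible_edges V" using subsetD[OF EV fE(1)] .
  have c0all: "c0 \<in> possible_edges V \<and> \<chi> ` c0 = f \<and> c0 \<notin> E - {e, h} \<union> {b}"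
    unfolding c0_def by (rule pull) (use fP in simp_all)
  note c0 = c0all[THEN conjunct1] c0all[THEN conjunct2, THEN conjunct1] c0all[THEN conjunct2, THEN conjunct2]
  have nsw1: False if "bij_betw \<sigma> V V" "(`) \<sigma> ` (E - {e} \<union> {b}) = E" for \<sigma>
  proof (rule nsw[OF that(1)])
    show "{e} \<subseteq> E" using eE by simp
    show "{b} \<subseteq> possible_edges V - E" using bE bP by simp
    show "e \<in> {e}" by simp
    show "card {e} \<le> 2" by simp
    show "(`) \<sigma> ` (E - {e} \<union> {b}) = E" by (rule that(2))
  qed
  have nsw2: False if "bij_betw \<sigma> V V" "c \<in> possible_edges V" "c \<notin> E"
    "(`) \<sigma> ` (E - {e, h} \<union> {b} \<union> {c}) = E" for \<sigma> c
  proof (rule nsw[OF that(1)])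
    show "{e, h} \<subseteq> E" using eE hE by simp
    show "{b, c} \<subseteq> possible_edges V - E" using bE bP that(2,3) by simp
    show "e \<in> {e, h}" by simp
    show "card {e, h} \<le> 2" by (cases "e = h") simp_all
    have "E - {e, h} \<union> {b, c} = E - {e, h} \<union> {b} \<union> {c}" by auto
    then show "(`) \<sigma> ` (E - {e, h} \<union> {b, c}) = E" using that(4) by simp
  qed
  have img4: "(`) \<chi> ` (E - {e, h} \<union> {b} \<union> {c0}) = E"
    using img3 c0(2) fE by auto
  show False
  proof (cases "c0 \<in> E")
    case False
    show False by (rule nsw2[OF \<chi>b c0(1) False img4])
  next
    case True
    then have "c0 = e \<or> c0 = h" using c0(3) by blast
    then show False
    proof
      assume "c0 = h"
      then have "E - {e, h} \<union> {b} \<union> {c0} = E - {e} \<union> {b}" using hE bE by auto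
      then show False using nsw1[OF \<chi>b] img4 by simp
    next
      assume c0e: "c0 = e"
      have set1: "E - {e, h} \<union> {b} \<union> {c0} = E - {h} \<union> {b}" using c0e eE hE by auto
      then have "sw1 h" unfolding sw1_def using img4 bE bP \<chi>b by auto
      then have "sw1 f" using fsw hE by blast
      then obtain b' \<phi> where b': "b' \<in> possible_edges V - E" and \<phi>b: "bij_betw \<phi> V V"
        and \<phi>i: "(`) \<phi> ` (E - {f} \<union> {b'}) = E" unfolding sw1_def by blast
      define c1 where "c1 = \<chi>' ` b'"
      have c1all: "c1 \<in> possible_edges V \<and> \<chi> ` c1 = b' \<and> c1 \<notin> E - {e, h} \<union> {b}"
        unfolding c1_def by (rule pull) (use b' in auto)
      note c1 = c1all[THEN conjunct1] c1all[THEN conjunct2, THEN conjunct1] c1all[THEN conjunct2, THEN conjunct2]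
      have c1e: "c1 \<noteq> e"
      proof
        assume "c1 = e"
        then have "b' = f" using c1(2) c0(2) c0e by simp
        then show False using b' fE by simp
      qed
      have img5: "(`) \<chi> ` (E - {e, h} \<union> {b} \<union> {c1}) = E - {f} \<union> {b'}"
        using img3 c1(2) by auto
      define \<theta> where "\<theta> = \<phi> \<circ> \<chi>"
      have \<theta>b: "bij_betw \<theta> V V" unfolding \<theta>_def using \<chi>b \<phi>b by (rule bij_betw_trans)
      have img6: "(`) \<theta> ` (E - {e, h} \<union> {b} \<union> {c1}) = E"
      proof -
        have "(`) \<theta> ` (E - {e, h} \<union> {b} \<union> {c1}) = (`) \<phi> ` ((`) \<chi> ` (E - {e, h} \<union> {b} \<union> {c1}))"
          unfolding \<theta>_def by (simp add: image_image image_comp)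
        also have "\<dots> = (`) \<phi> ` (E - {f} \<union> {b'})" by (simp only: img5)
        also have "\<dots> = E" by (rule \<phi>i)
        finally show ?thesis .
      qed
      show False
      proof (cases "c1 = h")
        case True
        then have "E - {e, h} \<union> {b} \<union> {c1} = E - {e} \<union> {b}" using hE bE by auto
        then show False using nsw1[OF \<theta>b] img6 by simp
      next
        case False
        then have c1E: "c1 \<notin> E" using c1(3) c1e by blast
        show False by (rule nsw2[OF \<theta>b c1(1) c1E img6])
      qed
    qed
  qed
qed

end
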